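(* For every $M\geq 1$, $$h(M)=\sum_{0\leq 2j\leq M-1}(j+1)\binom{M-j-1}{j}.$$
   Context: The perimeter of a nonempty partition $\lambda$ with largest part $\lambda_1$ and $\ell(\lambda)$ parts is $\lambda_1+\ell(\lambda)-1$. $h(M)$ is the total number of parts, summed over all partitions into distinct parts with perimeter $M$. *)

theory Defs
  imports Main
begin

text \<open>A partition into distinct parts is represented by its (finite, nonempty) set of parts,
  all positive integers. Largest part = Max, number of parts = card.\<close>

definition distinct_partitions :: "nat set set" where
  "distinct_partitions = {S. finite S \<and> S \<noteq> {} \<and> 0 \<notin> S}"

definition perimeter :: "nat set \<Rightarrow> nat" where
  "perimeter S = Max S + card S - 1"

definition h :: "nat \<Rightarrow> nat" where
  "h M = (\<Sum>S\<in>{S\<in>distinct_partitions. perimeter S = M}. card S)"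

end

theory Submission
  imports Defs
begin

definition BB :: "nat \<Rightarrow> nat \<Rightarrow> nat set set" where
  "BB M j = {S. S \<subseteq> {1..M-j} \<and> M - j \<in> S \<and> card S = j + 1}"

lemma card_BB:
  assumes "j < M"
  shows "card (BB M j) = (M - j - 1) choose j"
proof -
  have eq: "BB M j = insert (M-j) ` {T. T \<subseteq> {1..<M-j} \<and> card T = j}"
  proof (rule set_eqI, rule iffI)
    fix S assume S: "S \<in> BB M j"
    hence fin: "finite S" unfolding BB_def by (auto intro: finite_subset)
    have "S - {M-j} \<subseteq> {1..<M-j}" using S unfolding BB_def by auto
    moreover have "card (S - {M-j}) = j" using S fin unfolding BB_def by auto
    moreover have "S = insert (M-j) (S - {M-j})" using S unfolding BB_def by auto
    ultimately show "S \<in> insert (M-j) ` {T. T \<subseteq> {1..<M-j} \<and> card T = j}" by blast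
  next
    fix S assume "S \<in> insert (M-j) ` {T. T \<subseteq> {1..<M-j} \<and> card T = j}"
    then obtain T where T: "T \<subseteq> {1..<M-j}" "card T = j" "S = insert (M-j) T" by blast
    have "finite T" using T(1) by (auto intro: finite_subset)
    moreover have "M - j \<notin> T" using T(1) by auto
    ultimately have "card S = j + 1" using T by simp
    moreover have "S \<subseteq> {1..M-j}" using T assms by auto
    ultimately show "S \<in> BB M j" unfolding BB_def using T by auto
  qed
  have inj: "inj_on (insert (M-j)) {T. T \<subseteq> {1..<M-j} \<and> card T = j}"
    by (rule inj_onI) (metis Diff_insert_absorb atLeastLessThan_iff less_irrefl mem_Collect_eq subsetD)
  have "card (BB M j) = card {T. T \<subseteq> {1..<M-j} \<and> card T = j}"
    unfolding eq by (rule card_image[OF inj])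
  also have "\<dots> = card {1..<M-j} choose j" by (rule n_subsets) simp
  finally show ?thesis by simp
qed

lemma A_eq:
  assumes "M \<ge> 1" "2 * j \<le> M - 1"
  shows "{S\<in>{S\<in>distinct_partitions. perimeter S = M}. card S - 1 = j} = BB M j"
proof (rule set_eqI, rule iffI)
  fix S assume S: "S \<in> {S\<in>{S\<in>distinct_partitions. perimeter S = M}. card S - 1 = j}"
  hence fin: "finite S" and ne: "S \<noteq> {}" and z: "0 \<notin> S" and per: "Max S + card S - 1 = M"
    and c: "card S - 1 = j"
    unfolding distinct_partitions_def perimeter_def by auto
  have cp: "card S \<ge> 1" using fin ne by (simp add: Suc_leI card_gt_0_iff)
  have sub: "S \<subseteq> {1..Max S}" using fin z
    by (auto simp: Suc_le_eq) (metis gr0I)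
  have mx: "Max S \<in> S" using fin ne by simp
  have "M - j = Max S" using per c cp by auto
  thus "S \<in> BB M j" unfolding BB_def using sub mx c cp by auto
next
  fix S assume S: "S \<in> BB M j"
  hence sub: "S \<subseteq> {1..M-j}" and mem: "M - j \<in> S" and c: "card S = j + 1"
    unfolding BB_def by auto
  have fin: "finite S" using sub by (auto intro: finite_subset)
  have mx: "Max S = M - j" using fin mem sub by (intro Max_eqI) auto
  have "0 \<notin> S" using sub by auto
  moreover have "perimeter S = M" unfolding perimeter_def using mx c assms by simp
  ultimately show "S \<in> {S\<in>{S\<in>distinct_partitions. perimeter S = M}. card S - 1 = j}"
    unfolding distinct_partitions_def using fin mem c by auto
qed

theorem mainTheorem9:
  fixes M :: nat
  assumes "M \<ge> 1"
  shows "h M = (\<Sum>j | 2 * j \<le> M - 1. (j + 1) * ((M - j - 1) choose j))"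
proof -
  let ?A = "{S\<in>distinct_partitions. perimeter S = M}"
  let ?J = "{j. 2 * j \<le> M - 1}"
  have finJ: "finite ?J" by (rule finite_subset[of _ "{..M}"]) auto
  have finA: "finite ?A"
  proof (rule finite_subset[of _ "Pow {..M}"])
    show "?A \<subseteq> Pow {..M}"
    proof
      fix S assume S: "S \<in> ?A"
      hence fin: "finite S" and ne: "S \<noteq> {}" and per: "Max S + card S - 1 = M"
        unfolding distinct_partitions_def perimeter_def by auto
      have "card S \<ge> 1" using fin ne by (simp add: Suc_leI card_gt_0_iff)
      hence "Max S \<le> M" using per by linarith
      thus "S \<in> Pow {..M}" using fin by (auto dest: Max_ge)
    qed
  qed simp
  have img: "(\<lambda>S. card S - 1) ` ?A \<subseteq> ?J"
  proof
    fix x assume "x \<in> (\<lambda>S. card S - 1) ` ?A"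
    then obtain S where S: "S \<in> ?A" and x: "x = card S - 1" by blast
    hence fin: "finite S" and ne: "S \<noteq> {}" and z: "0 \<notin> S" and per: "Max S + card S - 1 = M"
      unfolding distinct_partitions_def perimeter_def by auto
    have cp: "card S \<ge> 1" using fin ne by (simp add: Suc_leI card_gt_0_iff)
    have sub: "S \<subseteq> {1..Max S}" using fin z
      by (auto simp: Suc_le_eq) (metis gr0I)
    have "card S \<le> Max S" using card_mono[OF _ sub] by simp
    thus "x \<in> ?J" using x per cp by auto
  qed
  have "h M = (\<Sum>j\<in>?J. \<Sum>S\<in>{S\<in>?A. card S - 1 = j}. card S)"
    unfolding h_def by (rule sum.group[OF finA finJ img, symmetric])
  also have "\<dots> = (\<Sum>j\<in>?J. (j + 1) * ((M - j - 1) choose j))"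
  proof (rule sum.cong[OF refl])
    fix j assume j: "j \<in> ?J"
    have jl: "j < M" using j assms by auto
    have "(\<Sum>S\<in>{S\<in>?A. card S - 1 = j}. card S) = (\<Sum>S\<in>BB M j. card S)"
      using A_eq[OF assms] j by simp
    also have "\<dots> = (\<Sum>S\<in>BB M j. j + 1)" by (rule sum.cong) (auto simp: BB_def)
    also have "\<dots> = (j + 1) * ((M - j - 1) choose j)" using card_BB[OF jl] by simp
    finally show "(\<Sum>S\<in>{S\<in>?A. card S - 1 = j}. card S) = (j + 1) * ((M - j - 1) choose j)" .
  qed
  finally show ?thesis .
qed

end
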